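(* Let $X$ be a scalable monoid over $R$. If $\mathsf{C}$ is a non-trivial orbitoid of $X$ (i.e. $\mathsf{C}\neq\{0_{\mathsf{C}}\}$) that contains a unit element, then $R$ is a non-trivial commutative ring, and $\mathsf{C}$, equipped with the addition $x+y=(\rho+\sigma)\cdot u$ (for $x=\rho\cdot u$, $y=\sigma\cdot u$, $u$ a unit element for $\mathsf{C}$) and with the scalar multiplication $(\lambda,x)\mapsto\lambda\cdot x$ inherited from $X$, is a free module of rank 1 over $R$.
   Context: $R$ is a unital associative (not necessarily commutative) ring. A scalable monoid over $R$ is a monoid $X$ (identity $1_X$) with a map $R\times X\to X$, $(\alpha,x)\mapsto\alpha\cdot x$, such that $1\cdot x=x$, $\alpha\cdot(\beta\cdot x)=\alpha\beta\cdot x$ and $\alpha\cdot xy=(\alpha\cdot x)y=x(\alpha\cdot y)$ for all $\alpha,\beta\in R$, $x,y\in X$. Two elements $x,y\in X$ are commensurable, $x\sim y$, if $\alpha\cdot x=\beta\cdot y$ for some $\alpha,\beta\in R$; this is an equivalence relation, and its equivalence classes are called orbitoids (commensurability classes). Every orbitoid $\mathsf{C}$ has a unique zero element $0_{\mathsf{C}}$ with $0_{\mathsf{C}}=0\cdot x$ for all $x\in\mathsf{C}$; $\mathsf{C}$ is trivial if $\mathsf{C}=\{0_{\mathsf{C}}\}$. A unit element for an orbitoid $\mathsf{C}$ is some $u\in\mathsf{C}$ such that every $x\in\mathsf{C}$ equals $\lambda\cdot u$ for some $\lambda\in R$, and such that $\lambda\cdot u=\lambda'\cdot u$ implies $\lambda=\lambda'$.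 For $x=\rho\cdot u$ and $y=\sigma\cdot u$ in $\mathsf{C}$ ($u$ a unit element for $\mathsf{C}$), the sum is defined as $x+y=(\rho+\sigma)\cdot u$; this does not depend on the choice of unit element $u$. *)

theory Defs
  imports Main
begin

definition scalable_monoid :: "('r::ring_1 \<Rightarrow> 'x::monoid_mult \<Rightarrow> 'x) \<Rightarrow> bool" where
  "scalable_monoid sc \<longleftrightarrow>
     (\<forall>x. sc 1 x = x) \<and>
     (\<forall>a b x. sc a (sc b x) = sc (a * b) x) \<and>
     (\<forall>a x y. sc a (x * y) = (sc a x) * y \<and> sc a (x * y) = x * (sc a y))"

definition commensurable :: "('r::ring_1 \<Rightarrow> 'x::monoid_mult \<Rightarrow> 'x) \<Rightarrow> 'x \<Rightarrow> 'x \<Rightarrow> bool" where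
  "commensurable sc x y \<longleftrightarrow> (\<exists>a b. sc a x = sc b y)"

definition orbitoid :: "('r::ring_1 \<Rightarrow> 'x::monoid_mult \<Rightarrow> 'x) \<Rightarrow> 'x set \<Rightarrow> bool" where
  "orbitoid sc C \<longleftrightarrow> (\<exists>x. C = {y. commensurable sc x y})"

text \<open>The zero element of an orbitoid: 0 \<cdot> x for any x in C.\<close>
definition orb_zero :: "('r::ring_1 \<Rightarrow> 'x::monoid_mult \<Rightarrow> 'x) \<Rightarrow> 'x set \<Rightarrow> 'x" where
  "orb_zero sc C = sc 0 (SOME x. x \<in> C)"

definition trivial_orbitoid :: "('r::ring_1 \<Rightarrow> 'x::monoid_mult \<Rightarrow> 'x) \<Rightarrow> 'x set \<Rightarrow> bool" where
  "trivial_orbitoid sc C \<longleftrightarrow> C = {orb_zero sc C}"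

definition unit_element :: "('r::ring_1 \<Rightarrow> 'x::monoid_mult \<Rightarrow> 'x) \<Rightarrow> 'x set \<Rightarrow> 'x \<Rightarrow> bool" where
  "unit_element sc C u \<longleftrightarrow> u \<in> C \<and> (\<forall>x\<in>C. \<exists>l. x = sc l u) \<and>
     (\<forall>l l'. sc l u = sc l' u \<longrightarrow> l = l')"

definition orb_add :: "('r::ring_1 \<Rightarrow> 'x::monoid_mult \<Rightarrow> 'x) \<Rightarrow> 'x set \<Rightarrow> 'x \<Rightarrow> 'x \<Rightarrow> 'x" where
  "orb_add sc C x y =
     (let u = (SOME u. unit_element sc C u) in
        sc ((THE r. x = sc r u) + (THE s. y = sc s u)) u)"

definition module_on :: "'x set \<Rightarrow> ('x \<Rightarrow> 'x \<Rightarrow> 'x) \<Rightarrow> 'x \<Rightarrow> ('r::ring_1 \<Rightarrow> 'x \<Rightarrow> 'x) \<Rightarrow> bool" where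
  "module_on M add z sm \<longleftrightarrow>
     (\<forall>x\<in>M. \<forall>y\<in>M. add x y \<in> M) \<and> z \<in> M \<and> (\<forall>a. \<forall>x\<in>M. sm a x \<in> M) \<and>
     (\<forall>x\<in>M. \<forall>y\<in>M. \<forall>w\<in>M. add (add x y) w = add x (add y w)) \<and>
     (\<forall>x\<in>M. \<forall>y\<in>M. add x y = add y x) \<and>
     (\<forall>x\<in>M. add z x = x) \<and>
     (\<forall>x\<in>M. \<exists>y\<in>M. add x y = z) \<and>
     (\<forall>a. \<forall>x\<in>M. \<forall>y\<in>M. sm a (add x y) = add (sm a x) (sm a y)) \<and>
     (\<forall>a b. \<forall>x\<in>M. sm (a + b) x = add (sm a x) (sm b x)) \<and>
     (\<forall>a b. \<forall>x\<in>M. sm (a * b) x = sm a (sm b x)) \<and>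
     (\<forall>x\<in>M. sm 1 x = x)"

definition free_rank1_module_on :: "'x set \<Rightarrow> ('x \<Rightarrow> 'x \<Rightarrow> 'x) \<Rightarrow> 'x \<Rightarrow> ('r::ring_1 \<Rightarrow> 'x \<Rightarrow> 'x) \<Rightarrow> bool" where
  "free_rank1_module_on M add z sm \<longleftrightarrow> module_on M add z sm \<and>
     (\<exists>u\<in>M. \<forall>x\<in>M. \<exists>!a. x = sm a u)"

end

theory Submission
  imports Defs
begin

theorem proposition2p36:
  fixes sc :: "'r::ring_1 \<Rightarrow> 'x::monoid_mult \<Rightarrow> 'x"
    and C :: "'x set"
  assumes "scalable_monoid sc"
    and "orbitoid sc C"
    and "\<not> trivial_orbitoid sc C"
    and "\<exists>u. unit_element sc C u"
  shows "(0::'r) \<noteq> 1 \<and> (\<forall>a b :: 'r. a * b = b * a) \<and>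
         free_rank1_module_on C (orb_add sc C) (orb_zero sc C) sc"
proof -
  have s1: "\<And>x. sc 1 x = x" and s2: "\<And>a b x. sc a (sc b x) = sc (a * b) x"
    and s3: "\<And>a x y. sc a (x * y) = (sc a x) * y" and s4: "\<And>a x y. sc a (x * y) = x * (sc a y)"
    using assms(1) unfolding scalable_monoid_def by metis+
  define v where "v = (SOME u. unit_element sc C u)"
  have uv: "unit_element sc C v" unfolding v_def using assms(4) by (rule someI_ex)
  hence vC: "v \<in> C" and vall: "\<forall>x\<in>C. \<exists>l. x = sc l v"
    and vinj: "\<And>l l'. sc l v = sc l' v \<Longrightarrow> l = l'"
    unfolding unit_element_def by auto
  obtain x0 where C: "C = {y. commensurable sc x0 y}" using assms(2) orbitoid_def by blast
  have inC: "sc l v \<in> C" for l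
  proof -
    from vC C obtain a b where ab: "sc a x0 = sc b v" unfolding commensurable_def by auto
    have "sc 0 x0 = sc 0 (sc a x0)" using s2 by simp
    also have "\<dots> = sc 0 (sc b v)" using ab by simp
    also have "\<dots> = sc 0 (sc l v)" using s2 by simp
    finally show ?thesis using C unfolding commensurable_def by auto
  qed
  have Ceq: "C = range (\<lambda>l. sc l v)" using inC vall by auto
  have the_eq: "(THE r. sc l v = sc r v) = l" for l
    by (rule the_equality) (auto dest: vinj)
  have add_eq: "orb_add sc C (sc a v) (sc b v) = sc (a + b) v" for a b
    unfolding orb_add_def Let_def v_def[symmetric] the_eq by simp
  have zero_eq: "orb_zero sc C = sc 0 v"
  proof -
    have "(SOME x. x \<in> C) \<in> C" using vC by (rule someI)
    then obtain l where "(SOME x. x \<in> C) = sc l v" using vall by blast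
    thus ?thesis unfolding orb_zero_def using s2 by simp
  qed
  have comm: "a * b = b * a" for a b :: 'r
  proof -
    have "(sc a v) * (sc b 1) = sc (a * b) v"
      by (metis s2 s3 s4 mult_1_right)
    moreover have "(sc a v) * (sc b 1) = sc (b * a) v"
      by (metis s2 s4 mult_1_right)
    ultimately show ?thesis using vinj by metis
  qed
  have nz: "(0::'r) \<noteq> 1"
  proof
    assume h: "(0::'r) = 1"
    have "C = {orb_zero sc C}"
    proof -
      have "sc l v = sc 0 v" for l
      proof -
        have "l = l * 1" by simp
        also have "\<dots> = 0" using h[symmetric] by simp
        finally show ?thesis by simp
      qed
      thus ?thesis using Ceq zero_eq by auto
    qed
    thus False using assms(3) unfolding trivial_orbitoid_def by simp
  qed
  have mod: "module_on C (orb_add sc C) (orb_zero sc C) sc"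
  proof -
    have ball: "(\<forall>x\<in>C. P x) = (\<forall>l. P (sc l v))" for P using Ceq by auto
    have bex: "(\<exists>x\<in>C. P x) = (\<exists>l. P (sc l v))" for P using Ceq by auto
    have inv: "\<exists>m. sc (l + m) v = sc 0 v" for l by (rule exI[of _ "-l"]) simp
    show ?thesis
      unfolding module_on_def zero_eq ball bex
      by (auto simp: add_eq s2 s1 inC algebra_simps inv)
  qed
  have free: "\<exists>u\<in>C. \<forall>x\<in>C. \<exists>!a. x = sc a u"
    using vC vall vinj by metis
  show ?thesis using nz comm mod free unfolding free_rank1_module_on_def by blast
qed

end
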